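(* Let each $f_i:\mathbb{R}^d\to\mathbb{R}$, $i\in[n]$, be differentiable with $L$-Lipschitz gradient. Consider the iteration $X^{(s+1)} = (X^{(s)} - \eta_s\,\partial f(X^{(s)}))W^{(s)}$ for $s = t,\dots,t+H-1$, where $W^{(t)}$ is a minimizer of $\min_{W\in\mathcal{M}_w}\|\partial f(\overline{X}^{(t)})W - \overline{\partial f}(\overline{X}^{(t)})\|_F^2$ and $W^{(t+i)} = W^{(t)}$ for $0\le i\le H-1$. Then $$\big\|\partial f(\overline{X}^{(t+H)})W^{(t)} - \overline{\partial f}(\overline{X}^{(t+H)})\big\|_F^2 \leq 2\big\|\partial f(\overline{X}^{(t)})W^{(t)} - \overline{\partial f}(\overline{X}^{(t)})\big\|_F^2 + 2H\sum_{i=0}^{H-1}\eta_{t+i}^2L^2\|\partial f(X^{(t+i)})\|_F^2.$$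
   Context: $X^{(s)} = [\mathbf{x}_1^{(s)},\dots,\mathbf{x}_n^{(s)}]\in\mathbb{R}^{d\times n}$; $\partial f(X) = [\nabla f_1(\mathbf{x}_1),\dots,\nabla f_n(\mathbf{x}_n)]$; for $Y\in\mathbb{R}^{d\times n}$, $\overline{Y} = Y\frac{\mathbf{1}\mathbf{1}^\top}{n}$ and $\overline{\partial f}(X) = \partial f(X)\frac{\mathbf{1}\mathbf{1}^\top}{n}$. Given a graph $G=(V,E)$ on $n$ nodes, $\mathcal{M}_w = \{W\in\mathbb{R}^{n\times n}: W\mathbf{1} = \mathbf{1},\ \mathbf{1}^\top W = \mathbf{1}^\top,\ 0\le w_{ij}\le 1\ \forall i,j,\ w_{ij}=0\ \forall (i,j)\notin E\}$. *)

theory Defs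
  imports "HOL-Analysis.Analysis"
begin

text \<open>A d x n matrix is modelled as real^'n^'d (rows indexed by 'd, columns = nodes 'n).\<close>

definition frob_norm :: "real^'n^'m \<Rightarrow> real" where
  "frob_norm A = sqrt (\<Sum>i\<in>UNIV. \<Sum>j\<in>UNIV. (A$i$j)^2)"

definition pgrad :: "('n \<Rightarrow> real^'d \<Rightarrow> real^'d) \<Rightarrow> real^'n^'d \<Rightarrow> real^'n^'d" where
  "pgrad g X = (\<chi> r j. (g j (column j X)) $ r)"

definition avg_mat :: "real^'n^'n" where
  "avg_mat = (\<chi> i j. 1 / real CARD('n))"

definition bar :: "real^'n^'d \<Rightarrow> real^'n^'d" where
  "bar Y = Y ** avg_mat"

definition Mw :: "('n \<times> 'n) set \<Rightarrow> (real^'n^'n) set" where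
  "Mw E = {W. W *v (\<chi> i. 1) = (\<chi> i. 1) \<and> (\<chi> i. 1) v* W = (\<chi> i. 1)
             \<and> (\<forall>i j. 0 \<le> W$i$j \<and> W$i$j \<le> 1)
             \<and> (\<forall>i j. (i, j) \<notin> E \<longrightarrow> W$i$j = 0)}"

end

theory Submission
  imports Defs
begin

definition fn2 :: "real^'n^'m \<Rightarrow> real" where
  "fn2 A = (\<Sum>i\<in>UNIV. \<Sum>j\<in>UNIV. (A$i$j)^2)"

lemma frob_sq: "(frob_norm A)^2 = fn2 A"
  by (simp add: frob_norm_def fn2_def sum_nonneg)

lemma wcs:
  fixes w a :: "'a \<Rightarrow> real"
  assumes "\<And>i. i \<in> I \<Longrightarrow> w i \<ge> 0"
  shows "(\<Sum>i\<in>I. w i * a i)^2 \<le> (\<Sum>i\<in>I. w i) * (\<Sum>i\<in>I. w i * (a i)^2)"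
proof -
  have "(\<Sum>i\<in>I. w i * a i) = (\<Sum>i\<in>I. sqrt (w i) * (sqrt (w i) * a i))"
    by (rule sum.cong) (auto simp: assms mult.assoc[symmetric])
  moreover have "(\<Sum>i\<in>I. w i) = (\<Sum>i\<in>I. (sqrt (w i))^2)"
    by (rule sum.cong) (auto simp: assms)
  moreover have "(\<Sum>i\<in>I. w i * (a i)^2) = (\<Sum>i\<in>I. (sqrt (w i) * a i)^2)"
    by (rule sum.cong) (auto simp: assms power_mult_distrib)
  ultimately show ?thesis
    using Cauchy_Schwarz_ineq_sum[of "\<lambda>i. sqrt (w i)" "\<lambda>i. sqrt (w i) * a i" I] by simp
qed

lemma Mw_rows: "W \<in> Mw E \<Longrightarrow> (\<Sum>j\<in>UNIV. W$i$j) = 1"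
  unfolding Mw_def by (auto simp: vec_eq_iff matrix_vector_mult_def)

lemma Mw_cols: "W \<in> Mw E \<Longrightarrow> (\<Sum>i\<in>UNIV. W$i$j) = 1"
  unfolding Mw_def by (auto simp: vec_eq_iff vector_matrix_mult_def)

lemma Mw_nonneg: "W \<in> Mw E \<Longrightarrow> 0 \<le> W$i$j"
  unfolding Mw_def by auto

lemma row_bound:
  fixes W :: "real^'n::finite^'n" and u :: "'n \<Rightarrow> real"
  assumes W: "W \<in> Mw E"
  shows "(\<Sum>j\<in>UNIV. ((\<Sum>i\<in>UNIV. u i * W$i$j) - (\<Sum>i\<in>UNIV. u i) / real CARD('n))^2)
     \<le> (\<Sum>i\<in>UNIV. (u i)^2)"
proof -
  define n where "n = real CARD('n)"
  have npos: "n > 0" by (simp add: n_def)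
  define m where "m = (\<Sum>i\<in>UNIV. u i) / n"
  have e1: "(\<Sum>i\<in>UNIV. u i * W$i$j) - m = (\<Sum>i\<in>UNIV. W$i$j * (u i - m))" for j
  proof -
    have "(\<Sum>i\<in>UNIV. W$i$j * (u i - m)) = (\<Sum>i\<in>UNIV. u i * W$i$j) - (\<Sum>i\<in>UNIV. W$i$j) * m"
      by (simp add: algebra_simps sum_subtractf sum_distrib_left sum_distrib_right)
    then show ?thesis using Mw_cols[OF W, of j] by simp
  qed
  have "(\<Sum>j\<in>UNIV. ((\<Sum>i\<in>UNIV. u i * W$i$j) - m)^2)
      \<le> (\<Sum>j\<in>UNIV. (\<Sum>i\<in>UNIV. W$i$j * (u i - m)^2))"
  proof (rule sum_mono)
    fix j
    have "((\<Sum>i\<in>UNIV. u i * W$i$j) - m)^2 \<le> (\<Sum>i\<in>UNIV. W$i$j) * (\<Sum>i\<in>UNIV. W$i$j * (u i - m)^2)"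
      unfolding e1 by (rule wcs) (simp add: Mw_nonneg[OF W])
    then show "((\<Sum>i\<in>UNIV. u i * W$i$j) - m)^2 \<le> (\<Sum>i\<in>UNIV. W$i$j * (u i - m)^2)"
      using Mw_cols[OF W, of j] by simp
  qed
  also have "\<dots> = (\<Sum>i\<in>UNIV. (\<Sum>j\<in>UNIV. W$i$j) * (u i - m)^2)"
    by (subst sum.swap) (simp add: sum_distrib_right)
  also have "\<dots> = (\<Sum>i\<in>UNIV. (u i - m)^2)"
    using Mw_rows[OF W] by simp
  also have "\<dots> = (\<Sum>i\<in>UNIV. (u i)^2) - 2 * m * (\<Sum>i\<in>UNIV. u i) + n * m^2"
  proof -
    have "(\<Sum>i\<in>UNIV. (u i - m)^2) = (\<Sum>i\<in>UNIV. (u i)^2 - (2 * m) * u i + m^2)"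
      by (rule sum.cong) (simp_all add: power2_diff mult_ac)
    also have "\<dots> = (\<Sum>i\<in>UNIV. (u i)^2) - (\<Sum>i\<in>UNIV. (2 * m) * u i) + (\<Sum>i\<in>(UNIV::'n set). m^2)"
      by (simp add: sum.distrib sum_subtractf)
    also have "\<dots> = (\<Sum>i\<in>UNIV. (u i)^2) - 2 * m * (\<Sum>i\<in>UNIV. u i) + n * m^2"
      by (simp add: sum_distrib_left[symmetric] n_def)
    finally show ?thesis .
  qed
  also have "\<dots> = (\<Sum>i\<in>UNIV. (u i)^2) - n * m^2"
    using npos by (simp add: m_def power2_eq_square field_simps)
  also have "\<dots> \<le> (\<Sum>i\<in>UNIV. (u i)^2)"
    using npos by simp
  finally show ?thesis by (simp add: m_def n_def)
qed

lemma mat_bound: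
  fixes W :: "real^'n::finite^'n" and D :: "real^'n^'d::finite"
  assumes W: "W \<in> Mw E"
  shows "fn2 (D ** W - bar D) \<le> fn2 D"
  unfolding fn2_def
proof (rule sum_mono)
  fix r
  have "(D ** W - bar D)$r$j = (\<Sum>i\<in>UNIV. D$r$i * W$i$j) - (\<Sum>i\<in>UNIV. D$r$i) / real CARD('n)" for j
    by (simp add: bar_def matrix_matrix_mult_def avg_mat_def sum_divide_distrib)
  then show "(\<Sum>j\<in>UNIV. ((D ** W - bar D) $ r $ j)\<^sup>2) \<le> (\<Sum>j\<in>UNIV. (D $ r $ j)\<^sup>2)"
    using row_bound[OF W, of "\<lambda>i. D$r$i"] by simp
qed

lemma fn2_add: "fn2 (A + B) \<le> 2 * fn2 A + 2 * fn2 B"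
proof -
  have "fn2 (A + B) \<le> (\<Sum>i\<in>UNIV. \<Sum>j\<in>UNIV. 2 * (A$i$j)^2 + 2 * (B$i$j)^2)"
    unfolding fn2_def
  proof (intro sum_mono)
    fix i j
    have "0 \<le> (A$i$j - B$i$j)^2" by simp
    then show "((A + B)$i$j)^2 \<le> 2 * (A$i$j)^2 + 2 * (B$i$j)^2"
      by (simp add: power2_eq_square algebra_simps)
  qed
  also have "\<dots> = 2 * fn2 A + 2 * fn2 B"
    by (simp add: fn2_def sum.distrib sum_distrib_left)
  finally show ?thesis .
qed

lemma decomp: "P1 ** W - bar P1 = (P0 ** W - bar P0) + ((P1 - P0) ** W - bar (P1 - P0))"
  by (simp add: bar_def vec_eq_iff matrix_matrix_mult_def sum_subtractf algebra_simps)


theorem proposition1: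
  fixes f :: "'n::finite \<Rightarrow> real^'d::finite \<Rightarrow> real"
    and g :: "'n \<Rightarrow> real^'d \<Rightarrow> real^'d"
    and L :: real
    and E :: "('n \<times> 'n) set"
    and X :: "nat \<Rightarrow> real^'n^'d"
    and W :: "nat \<Rightarrow> real^'n^'n"
    and \<eta> :: "nat \<Rightarrow> real"
    and t H :: nat
  assumes grad: "\<And>i x. GDERIV (f i) x :> g i x"
    and lip: "\<And>i x y. norm (g i x - g i y) \<le> L * dist x y"
    and Wmin: "W t \<in> Mw E"
      "\<And>V. V \<in> Mw E \<Longrightarrow>
         (frob_norm (pgrad g (bar (X t)) ** W t - bar (pgrad g (bar (X t)))))^2
         \<le> (frob_norm (pgrad g (bar (X t)) ** V - bar (pgrad g (bar (X t)))))^2"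
    and Wconst: "\<And>i. i < H \<Longrightarrow> W (t + i) = W t"
    and iter: "\<And>s. t \<le> s \<Longrightarrow> s < t + H \<Longrightarrow>
        X (Suc s) = (X s - \<eta> s *\<^sub>R pgrad g (X s)) ** W s"
  shows "(frob_norm (pgrad g (bar (X (t + H))) ** W t - bar (pgrad g (bar (X (t + H))))))^2
    \<le> 2 * (frob_norm (pgrad g (bar (X t)) ** W t - bar (pgrad g (bar (X t)))))^2
      + 2 * real H * (\<Sum>i<H. (\<eta> (t + i))^2 * L^2 * (frob_norm (pgrad g (X (t + i))))^2)"
proof -
  define n where "n = real CARD('n)"
  have npos: "n > 0" by (simp add: n_def)
  define m where "m s = (\<chi> r. (\<Sum>j\<in>UNIV. X s $r$j) / n)" for s
  define gm where "gm s = (\<chi> r. (\<Sum>j\<in>UNIV. pgrad g (X s) $r$j) / n)" for s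
  have pb: "pgrad g (bar (X s)) = (\<chi> r j. g j (m s) $ r)" for s
  proof -
    have "column j (bar (X s)) = m s" for j
      by (simp add: column_def bar_def m_def n_def matrix_matrix_mult_def avg_mat_def vec_eq_iff
          sum_divide_distrib)
    then show ?thesis by (simp add: pgrad_def)
  qed
  have step: "m (Suc s) = m s - \<eta> s *\<^sub>R gm s" if "t \<le> s" "s < t+H" for s
  proof -
    have Ws: "W s = W t" using Wconst[of "s - t"] that by simp
    define Y where "Y = X s - \<eta> s *\<^sub>R pgrad g (X s)"
    have "(\<Sum>j\<in>UNIV. X (Suc s)$r$j) = (\<Sum>k\<in>UNIV. Y$r$k)" for r
    proof -
      have "(\<Sum>j\<in>UNIV. X (Suc s)$r$j) = (\<Sum>j\<in>UNIV. \<Sum>k\<in>UNIV. Y$r$k * W t$k$j)"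
        using iter[OF that] Ws by (simp add: matrix_matrix_mult_def Y_def)
      also have "\<dots> = (\<Sum>k\<in>UNIV. Y$r$k * (\<Sum>j\<in>UNIV. W t$k$j))"
        by (subst sum.swap) (simp add: sum_distrib_left)
      also have "\<dots> = (\<Sum>k\<in>UNIV. Y$r$k)" using Mw_rows[OF Wmin(1)] by simp
      finally show ?thesis .
    qed
    then show ?thesis
      by (simp add: m_def gm_def vec_eq_iff Y_def sum_subtractf sum_distrib_left[symmetric]
          diff_divide_distrib)
  qed
  have tele: "k \<le> H \<Longrightarrow> m (t+k) = m t - (\<Sum>i<k. \<eta> (t+i) *\<^sub>R gm (t+i))" for k
  proof (induction k)
    case 0 then show ?case by simp
  next
    case (Suc k)
    then have "m (t + Suc k) = m (t+k) - \<eta> (t+k) *\<^sub>R gm (t+k)"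
      using step[of "t+k"] by simp
    then show ?case using Suc by simp
  qed
  have gmb: "(norm (gm s))^2 \<le> fn2 (pgrad g (X s)) / n" for s
  proof -
    have "(norm (gm s))^2 = (\<Sum>r\<in>UNIV. (gm s $ r)^2)"
      by (simp only: power2_norm_eq_inner) (simp add: inner_vec_def power2_eq_square)
    also have "\<dots> \<le> (\<Sum>r\<in>UNIV. (\<Sum>j\<in>UNIV. (pgrad g (X s)$r$j)^2) / n)"
    proof (rule sum_mono)
      fix r
      have "(gm s $ r)^2 = (\<Sum>j\<in>UNIV. (1/n) * pgrad g (X s)$r$j)^2"
        by (simp add: gm_def sum_divide_distrib)
      also have "\<dots> \<le> (\<Sum>j\<in>(UNIV::'n set). 1/n) * (\<Sum>j\<in>UNIV. (1/n) * (pgrad g (X s)$r$j)^2)"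
        by (rule wcs) (simp add: npos less_imp_le)
      also have "\<dots> = (\<Sum>j\<in>UNIV. (pgrad g (X s)$r$j)^2) / n"
        using npos by (simp add: n_def sum_distrib_left[symmetric] sum_divide_distrib)
      finally show "(gm s $ r)^2 \<le> (\<Sum>j\<in>UNIV. (pgrad g (X s)$r$j)^2) / n" .
    qed
    also have "\<dots> = fn2 (pgrad g (X s)) / n" by (simp add: fn2_def sum_divide_distrib)
    finally show ?thesis .
  qed
  define D where "D = pgrad g (bar (X (t+H))) - pgrad g (bar (X t))"
  have Db: "fn2 D \<le> n * L^2 * (norm (m (t+H) - m t))^2"
  proof -
    have "fn2 D = (\<Sum>r\<in>UNIV. \<Sum>j\<in>UNIV. (g j (m (t+H)) $ r - g j (m t) $ r)^2)"
      by (simp add: fn2_def D_def pb)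
    also have "\<dots> = (\<Sum>j\<in>UNIV. \<Sum>r\<in>UNIV. (g j (m (t+H)) $ r - g j (m t) $ r)^2)"
      by (rule sum.swap)
    also have "\<dots> = (\<Sum>j\<in>UNIV. (norm (g j (m (t+H)) - g j (m t)))^2)"
      by (simp only: power2_norm_eq_inner) (simp add: inner_vec_def power2_eq_square)
    also have "\<dots> \<le> (\<Sum>j\<in>(UNIV::'n set). L^2 * (norm (m (t+H) - m t))^2)"
    proof (rule sum_mono)
      fix j
      have "norm (g j (m (t+H)) - g j (m t)) \<le> L * norm (m (t+H) - m t)"
        using lip[of j "m (t+H)" "m t"] by (simp add: dist_norm)
      then have "(norm (g j (m (t+H)) - g j (m t)))^2 \<le> (L * norm (m (t+H) - m t))^2"
        by (rule power_mono) simp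
      then show "(norm (g j (m (t+H)) - g j (m t)))^2 \<le> L^2 * (norm (m (t+H) - m t))^2"
        by (simp add: power_mult_distrib)
    qed
    also have "\<dots> = n * L^2 * (norm (m (t+H) - m t))^2" by (simp add: n_def)
    finally show ?thesis .
  qed
  have Sb: "(norm (m (t+H) - m t))^2 \<le> real H * (\<Sum>i<H. (\<eta> (t+i))^2 * (norm (gm (t+i)))^2)"
  proof -
    have "m (t+H) - m t = - (\<Sum>i<H. \<eta> (t+i) *\<^sub>R gm (t+i))" using tele[of H] by simp
    then have "norm (m (t+H) - m t) \<le> (\<Sum>i<H. norm (\<eta> (t+i) *\<^sub>R gm (t+i)))"
      using norm_sum[of "\<lambda>i. \<eta> (t+i) *\<^sub>R gm (t+i)" "{..<H}"] by simp
    then have "(norm (m (t+H) - m t))^2 \<le> (\<Sum>i<H. norm (\<eta> (t+i) *\<^sub>R gm (t+i)))^2"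
      by (rule power_mono) simp
    also have "\<dots> \<le> (\<Sum>i<H. (norm (\<eta> (t+i) *\<^sub>R gm (t+i)))^2) * real H"
      using sum_squared_le_sum_of_squares[of "\<lambda>i. norm (\<eta> (t+i) *\<^sub>R gm (t+i))" "{..<H}"] by simp
    also have "\<dots> = real H * (\<Sum>i<H. (\<eta> (t+i))^2 * (norm (gm (t+i)))^2)"
      by (simp add: power_mult_distrib mult.commute)
    finally show ?thesis .
  qed
  have Gb: "(\<Sum>i<H. (\<eta> (t+i))^2 * (norm (gm (t+i)))^2)
      \<le> (\<Sum>i<H. (\<eta> (t+i))^2 * (fn2 (pgrad g (X (t+i))) / n))"
    by (rule sum_mono, rule mult_left_mono[OF gmb]) simp
  have DD: "fn2 D \<le> real H * (\<Sum>i<H. (\<eta> (t+i))^2 * L^2 * fn2 (pgrad g (X (t+i))))"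
  proof -
    have nl: "0 \<le> n * L^2" using npos by simp
    have "fn2 D \<le> n * L^2 * (real H * (\<Sum>i<H. (\<eta> (t+i))^2 * (norm (gm (t+i)))^2))"
      using Db mult_left_mono[OF Sb nl] by linarith
    also have "\<dots> \<le> n * L^2 * (real H * (\<Sum>i<H. (\<eta> (t+i))^2 * (fn2 (pgrad g (X (t+i))) / n)))"
      by (rule mult_left_mono[OF mult_left_mono[OF Gb] nl]) simp
    also have "\<dots> = real H * (\<Sum>i<H. n * L^2 * ((\<eta> (t+i))^2 * (fn2 (pgrad g (X (t+i))) / n)))"
      by (simp only: sum_distrib_left mult_ac)
    also have "\<dots> = real H * (\<Sum>i<H. (\<eta> (t+i))^2 * L^2 * fn2 (pgrad g (X (t+i))))"
      by (rule arg_cong[where f="\<lambda>x. real H * x"], rule sum.cong) (use npos in auto)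
    finally show ?thesis .
  qed
  have "fn2 (pgrad g (bar (X (t + H))) ** W t - bar (pgrad g (bar (X (t + H)))))
      = fn2 ((pgrad g (bar (X t)) ** W t - bar (pgrad g (bar (X t)))) + (D ** W t - bar D))"
    unfolding D_def by (subst decomp) (rule refl)
  also have "\<dots> \<le> 2 * fn2 (pgrad g (bar (X t)) ** W t - bar (pgrad g (bar (X t)))) + 2 * fn2 (D ** W t - bar D)"
    by (rule fn2_add)
  also have "\<dots> \<le> 2 * fn2 (pgrad g (bar (X t)) ** W t - bar (pgrad g (bar (X t)))) + 2 * fn2 D"
    using mat_bound[OF Wmin(1), of D] by simp
  also have "\<dots> \<le> 2 * fn2 (pgrad g (bar (X t)) ** W t - bar (pgrad g (bar (X t))))
      + 2 * real H * (\<Sum>i<H. (\<eta> (t+i))^2 * L^2 * fn2 (pgrad g (X (t+i))))"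
    using DD by simp
  finally show ?thesis unfolding frob_sq .
qed

end
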